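(* Let $r_{\min}\in(0,1)$, $n\ge1$, $\gamma\ge1$ a perfect-square integer, and $\ell\ge0$ an integer with $\gamma^{\ell+1}\le n$. Put $a_\ell=n/\gamma^\ell$, $a_{\ell+1}=a_\ell/\gamma$, $n_\ell=n/(2^\ell\gamma^\ell)$, $n_{\ell+1}=n_\ell/(2\gamma)$, $K_1=\frac{4(1+r_{\min})^2}{\pi r_{\min}^2}$, $K_2=\frac1{2K_1}$, $K_3=4/K_2$, $M=K_22^{-\ell}\gamma$ (all assumed integers, $M$ even), and assume $M\ge100$. Let $V\subset[0,\sqrt{a_\ell}]^2$ with $|V|=n_\ell$ and minimum separation $r_{\min}$, partition $[0,\sqrt{a_\ell}]^2$ into $\gamma$ squarelets of side $\sqrt{a_{\ell+1}}$, and let $\mathcal D$ be a set of $M$ dense squarelets (squarelets containing at least $n_{\ell+1}$ points of $V$). Let $\lambda$ be any permutation traffic matrix on $V$, i.e., a set of $n_\ell$ source–destination pairs $(u,w)$ in which every node is a source exactly once and a destination exactly once. Then one can assign to every pair $(u,w)$ a squarelet $k(u,w)\in\mathcal D$ with $r_{u,k(u,w)}\ge\sqrt{2a_{\ell+1}}$ and $r_{w,k(u,w)}\ge\sqrt{2a_{\ell+1}}$, and partition the set of pairs into at most $\lceil K_32^\ell\rceil$ classes such that within each class every squarelet of $\mathcal D$ is assigned to at most $n_{\ell+1}$ pairs.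
   Context: For a point $u$ and a squarelet $A$, $r_{u,A}=\min_{v\in A}\lVert u-v\rVert$ denotes the Euclidean distance from $u$ to the closest point of $A$. *)

theory Defs
  imports "HOL-Analysis.Analysis"
begin

text \<open>Points of the plane are pairs of reals; the product norm on real \<times> real is Euclidean.\<close>

definition squarelet :: "real \<Rightarrow> nat \<times> nat \<Rightarrow> (real \<times> real) set" where
  "squarelet s ij = {x. real (fst ij) * s \<le> fst x \<and> fst x \<le> (real (fst ij) + 1) * s
                      \<and> real (snd ij) * s \<le> snd x \<and> snd x \<le> (real (snd ij) + 1) * s}"

definition permutation_traffic :: "'a set \<Rightarrow> ('a \<times> 'a) set \<Rightarrow> bool" where
  "permutation_traffic V \<Lambda> \<longleftrightarrow> \<Lambda> \<subseteq> V \<times> V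
     \<and> (\<forall>u\<in>V. \<exists>!w. (u, w) \<in> \<Lambda>) \<and> (\<forall>w\<in>V. \<exists>!u. (u, w) \<in> \<Lambda>)"

end

theory Submission
  imports Defs
begin

lemma infdist_geI: "A \<noteq> {} \<Longrightarrow> (\<And>a. a \<in> A \<Longrightarrow> c \<le> dist x a) \<Longrightarrow> c \<le> infdist x A"
  by (simp add: infdist_notempty cINF_greatest)

lemma card_window: "card {i::nat. x < real i \<and> real i < x + 5} \<le> 5"
proof -
  define a where "a = nat (\<lfloor>x\<rfloor> + 1)"
  have "{i::nat. x < real i \<and> real i < x + 5} \<subseteq> {a..<a+5}"
  proof
    fix i assume "i \<in> {i::nat. x < real i \<and> real i < x + 5}"
    hence h: "x < real i" "real i < x + 5" by auto
    have "\<lfloor>x\<rfloor> + 1 \<le> int i" using h(1) by linarith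
    moreover have "int i \<le> \<lfloor>x\<rfloor> + 5" using h(2) by linarith
    ultimately show "i \<in> {a..<a+5}" unfolding a_def by auto
  qed
  thus ?thesis by (metis card_atLeastLessThan diff_add_inverse card_mono finite_atLeastLessThan)
qed

lemma coord_window:
  assumes s: "s > 0" and lt: "infdist u (squarelet s (i,j)) < sqrt 2 * s"
  shows "fst u / s - 1 - sqrt 2 < real i \<and> real i < fst u / s - 1 - sqrt 2 + 5"
    and "snd u / s - 1 - sqrt 2 < real j \<and> real j < snd u / s - 1 - sqrt 2 + 5"
proof -
  let ?S = "squarelet s (i,j)"
  have "(real i * s, real j * s) \<in> ?S" using s by (simp add: squarelet_def)
  hence ne: "?S \<noteq> {}" by blast
  have d1: "\<bar>fst u - fst x\<bar> \<le> dist u x" and d2: "\<bar>snd u - snd x\<bar> \<le> dist u x" for x :: "real \<times> real"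
    by (cases u; cases x; simp add: dist_Pair_Pair dist_real_def real_sqrt_sum_squares_ge1 real_sqrt_sum_squares_ge2)+
  have s2: "sqrt 2 < 2" by (smt (verit) real_sqrt_four real_sqrt_less_iff)
  have "real i * s < fst u + sqrt 2 * s"
  proof (rule ccontr)
    assume "\<not> ?thesis"
    hence "sqrt 2 * s \<le> infdist u ?S"
      by (intro infdist_geI[OF ne]) (smt (verit) d1 squarelet_def mem_Collect_eq fst_conv)
    thus False using lt by simp
  qed
  moreover have "fst u - sqrt 2 * s < (real i + 1) * s"
  proof (rule ccontr)
    assume "\<not> ?thesis"
    hence "sqrt 2 * s \<le> infdist u ?S"
      by (intro infdist_geI[OF ne]) (smt (verit) d1 squarelet_def mem_Collect_eq fst_conv)
    thus False using lt by simp
  qed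
  ultimately have "real i < fst u / s + sqrt 2" "fst u / s - 1 - sqrt 2 < real i"
    using s by (simp_all add: field_simps)
  thus "fst u / s - 1 - sqrt 2 < real i \<and> real i < fst u / s - 1 - sqrt 2 + 5"
    using s2 by linarith
  have "real j * s < snd u + sqrt 2 * s"
  proof (rule ccontr)
    assume "\<not> ?thesis"
    hence "sqrt 2 * s \<le> infdist u ?S"
      by (intro infdist_geI[OF ne]) (smt (verit) d2 squarelet_def mem_Collect_eq snd_conv)
    thus False using lt by simp
  qed
  moreover have "snd u - sqrt 2 * s < (real j + 1) * s"
  proof (rule ccontr)
    assume "\<not> ?thesis"
    hence "sqrt 2 * s \<le> infdist u ?S"
      by (intro infdist_geI[OF ne]) (smt (verit) d2 squarelet_def mem_Collect_eq snd_conv)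
    thus False using lt by simp
  qed
  ultimately have "real j < snd u / s + sqrt 2" "snd u / s - 1 - sqrt 2 < real j"
    using s by (simp_all add: field_simps)
  thus "snd u / s - 1 - sqrt 2 < real j \<and> real j < snd u / s - 1 - sqrt 2 + 5"
    using s2 by linarith
qed

lemma bad_card:
  assumes s: "s > 0"
  shows "finite {d. infdist u (squarelet s d) < sqrt 2 * s} \<and> card {d. infdist u (squarelet s d) < sqrt 2 * s} \<le> 25"
proof -
  let ?x = "fst u / s - 1 - sqrt 2" and ?y = "snd u / s - 1 - sqrt 2"
  let ?A = "{i::nat. ?x < real i \<and> real i < ?x + 5}" and ?B = "{i::nat. ?y < real i \<and> real i < ?y + 5}"
  have fA: "finite ?A" by (rule finite_subset[of _ "{..<nat \<lceil>?x + 5\<rceil>}"]) (auto, linarith)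
  have fB: "finite ?B" by (rule finite_subset[of _ "{..<nat \<lceil>?y + 5\<rceil>}"]) (auto, linarith)
  have sub: "{d. infdist u (squarelet s d) < sqrt 2 * s} \<subseteq> ?A \<times> ?B"
  proof
    fix d assume "d \<in> {d. infdist u (squarelet s d) < sqrt 2 * s}"
    hence hd: "infdist u (squarelet s (fst d, snd d)) < sqrt 2 * s" by simp
    from coord_window[OF s hd] show "d \<in> ?A \<times> ?B" by (simp add: mem_Times_iff)
  qed
  have "card {d. infdist u (squarelet s d) < sqrt 2 * s} \<le> card (?A \<times> ?B)"
    by (rule card_mono[OF finite_cartesian_product[OF fA fB] sub])
  also have "\<dots> = card ?A * card ?B" by (rule card_cartesian_product)
  also have "\<dots> \<le> 5 * 5" by (intro mult_mono card_window) auto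
  finally have "card {d. infdist u (squarelet s d) < sqrt 2 * s} \<le> 25" by simp
  moreover have "finite {d. infdist u (squarelet s d) < sqrt 2 * s}"
    by (rule finite_subset[OF sub finite_cartesian_product[OF fA fB]])
  ultimately show ?thesis by simp
qed

lemma greedy:
  fixes E :: "'p \<Rightarrow> 'd set"
  assumes fP: "finite P" and fD: "finite D" and bad: "\<forall>p\<in>P. card (D - E p) \<le> e"
    and cP: "card P \<le> (card D - e) * q"
  shows "\<exists>k. (\<forall>p\<in>P. k p \<in> D \<inter> E p) \<and> (\<forall>d\<in>D. card {p\<in>P. k p = d} \<le> q)"
  using fP bad cP
proof (induction P rule: finite_induct)
  case empty
  show ?case by auto
next
  case (insert x F)
  from insert.prems have b: "\<forall>p\<in>F. card (D - E p) \<le> e" and bx: "card (D - E x) \<le> e" by auto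
  from insert.prems insert.hyps have cF: "card F < (card D - e) * q" by simp
  have "card F \<le> (card D - e) * q" using cF by simp
  from insert.IH[OF b this] obtain k where
    k1: "\<forall>p\<in>F. k p \<in> D \<inter> E p" and k2: "\<forall>d\<in>D. card {p\<in>F. k p = d} \<le> q" by blast
  define Full where "Full = {d\<in>D. q \<le> card {p\<in>F. k p = d}}"
  have "card Full * q = (\<Sum>d\<in>Full. q)" by simp
  also have "\<dots> \<le> (\<Sum>d\<in>Full. card {p\<in>F. k p = d})"
    by (rule sum_mono) (simp add: Full_def)
  also have "\<dots> \<le> (\<Sum>d\<in>D. card {p\<in>F. k p = d})"
    by (rule sum_mono2[OF fD]) (auto simp: Full_def)
  also have "\<dots> = (\<Sum>d\<in>D. \<Sum>p\<in>{p\<in>F. k p = d}. (1::nat))" by simp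
  also have "\<dots> = (\<Sum>p\<in>F. (1::nat))"
    by (rule sum.group[OF insert.hyps(1) fD]) (use k1 in auto)
  also have "\<dots> = card F" by simp
  finally have "card Full * q < (card D - e) * q" using cF by linarith
  hence cFull: "card Full < card D - e" by (metis mult_less_cancel2)
  have "card D \<le> card (D \<inter> E x) + card (D - E x)"
    by (metis Diff_Int2 card_Un_le Int_Diff_Un inf.idem order_eq_refl fD)
  hence "card Full < card (D \<inter> E x)" using bx cFull by linarith
  hence "\<not> (D \<inter> E x \<subseteq> Full)"
    using card_mono[of Full "D \<inter> E x"] fD by (auto simp: Full_def)
  then obtain d0 where d0: "d0 \<in> D" "d0 \<in> E x" "d0 \<notin> Full" by blast
  define k' where "k' = k(x := d0)"
  have "\<forall>p\<in>insert x F. k' p \<in> D \<inter> E p" using k1 d0 insert.hyps by (auto simp: k'_def)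
  moreover have "\<forall>d\<in>D. card {p\<in>insert x F. k' p = d} \<le> q"
  proof
    fix d assume dD: "d \<in> D"
    show "card {p\<in>insert x F. k' p = d} \<le> q"
    proof (cases "d = d0")
      case True
      have "{p\<in>insert x F. k' p = d} = insert x {p\<in>F. k p = d}"
        using True insert.hyps by (auto simp: k'_def)
      moreover have "card (insert x {p\<in>F. k p = d}) = Suc (card {p\<in>F. k p = d})"
        using insert.hyps by simp
      moreover have "card {p\<in>F. k p = d} < q" using d0 True dD by (auto simp: Full_def)
      ultimately show ?thesis by simp
    next
      case False
      have "{p\<in>insert x F. k' p = d} = {p\<in>F. k p = d}"
        using False insert.hyps by (auto simp: k'_def)
      thus ?thesis using k2 dD by simp
    qed
  qed
  ultimately show ?case by blast
qed

theorem lemma2: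
  fixes r_min :: real and n gam g l :: nat
    and V :: "(real \<times> real) set"
    and D :: "(nat \<times> nat) set"
    and \<Lambda> :: "((real \<times> real) \<times> (real \<times> real)) set"
  defines "a_l \<equiv> real n / real gam ^ l"
    and "a_l1 \<equiv> real n / real gam ^ l / real gam"
    and "n_l \<equiv> real n / (2 ^ l * real gam ^ l)"
    and "n_l1 \<equiv> real n / (2 ^ l * real gam ^ l) / (2 * real gam)"
    and "K2 \<equiv> 1 / (2 * (4 * (1 + r_min)\<^sup>2 / (pi * r_min\<^sup>2)))"
    and "K3 \<equiv> 4 / (1 / (2 * (4 * (1 + r_min)\<^sup>2 / (pi * r_min\<^sup>2))))"
    and "M \<equiv> 1 / (2 * (4 * (1 + r_min)\<^sup>2 / (pi * r_min\<^sup>2))) / 2 ^ l * real gam"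
  assumes r_min: "0 < r_min" "r_min < 1"
    and n: "n \<ge> 1"
    and gam: "gam \<ge> 1" "gam = g\<^sup>2"
    and gl: "gam ^ (l + 1) \<le> n"
    and ints: "a_l \<in> \<int>" "a_l1 \<in> \<int>" "n_l \<in> \<int>" "n_l1 \<in> \<int>" "M \<in> \<int>"
    and M_even: "\<exists>m::int. M = 2 * of_int m"
    and M_ge: "M \<ge> 100"
    and V_fin: "finite V"
    and V_box: "V \<subseteq> {0..sqrt a_l} \<times> {0..sqrt a_l}"
    and V_card: "real (card V) = n_l"
    and V_sep: "\<forall>u\<in>V. \<forall>v\<in>V. u \<noteq> v \<longrightarrow> dist u v \<ge> r_min"
    and D_sub: "D \<subseteq> {..<g} \<times> {..<g}"
    and D_card: "real (card D) = M"
    and D_dense: "\<forall>d\<in>D. real (card (V \<inter> squarelet (sqrt a_l1) d)) \<ge> n_l1"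
    and traffic: "permutation_traffic V \<Lambda>"
  shows "\<exists>(k :: (real \<times> real) \<times> (real \<times> real) \<Rightarrow> nat \<times> nat)
            (c :: (real \<times> real) \<times> (real \<times> real) \<Rightarrow> nat).
           (\<forall>p\<in>\<Lambda>. k p \<in> D
              \<and> infdist (fst p) (squarelet (sqrt a_l1) (k p)) \<ge> sqrt (2 * a_l1)
              \<and> infdist (snd p) (squarelet (sqrt a_l1) (k p)) \<ge> sqrt (2 * a_l1)
              \<and> real (c p) < of_int \<lceil>K3 * 2 ^ l\<rceil>)
         \<and> (\<forall>j. \<forall>d\<in>D. real (card {p\<in>\<Lambda>. c p = j \<and> k p = d}) \<le> n_l1)"
proof -
  have gpos: "real gam > 0" using gam(1) by simp
  have K2pos: "K2 > 0" unfolding K2_def using r_min pi_gt_zero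
    by (intro divide_pos_pos mult_pos_pos) (auto simp: power2_eq_square)
  have al1: "a_l1 > 0" unfolding a_l1_def using n gpos by simp
  define s where "s = sqrt a_l1"
  have s: "s > 0" using al1 s_def by simp
  have sq2: "sqrt (2 * a_l1) = sqrt 2 * s" by (simp add: s_def real_sqrt_mult)
  have nl1pos: "n_l1 > 0" unfolding n_l1_def using n gpos by simp
  obtain z where z: "n_l1 = of_int z" using ints(4) Ints_cases by blast
  define q where "q = nat z"
  have q: "real q = n_l1" "q > 0" using z nl1pos by (auto simp: q_def)
  obtain mm where mm: "M = 2 * of_int mm" using M_even by blast
  have cD: "card D = 2 * nat mm" using D_card mm M_ge by simp
  have cD100: "card D \<ge> 100" using D_card M_ge by simp
  define h where "h = card D div 2 * q"
  have hreal: "real h = M / 2 * n_l1" using cD D_card q by (simp add: h_def)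
  have hpos: "h > 0" using cD100 q by (simp add: h_def)
  have h50: "h \<le> (card D - 50) * q" unfolding h_def using cD100 by (intro mult_right_mono) auto
  have finL: "finite \<Lambda>" using traffic V_fin unfolding permutation_traffic_def
    by (metis finite_SigmaI finite_subset)
  have T1: "\<Lambda> \<subseteq> V \<times> V" and T2: "\<forall>u\<in>V. \<exists>!w. (u, w) \<in> \<Lambda>"
    using traffic unfolding permutation_traffic_def by blast+
  have "bij_betw fst \<Lambda> V"
    unfolding bij_betw_def inj_on_def
  proof (intro conjI ballI impI)
    fix x y assume xy: "x \<in> \<Lambda>" "y \<in> \<Lambda>" "fst x = fst y"
    then have "fst x \<in> V" using T1 by auto
    hence ex1: "\<exists>!w. (fst x, w) \<in> \<Lambda>" using T2 by blast
    have "(fst x, snd x) \<in> \<Lambda>" using xy(1) by simp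
    moreover have "(fst x, snd y) \<in> \<Lambda>" using xy(2,3) by (metis prod.collapse)
    ultimately
    have "snd x = snd y" using ex1 by blast
    thus "x = y" using xy(3) by (simp add: prod_eq_iff)
  next
    show "fst ` \<Lambda> = V"
    proof
      show "fst ` \<Lambda> \<subseteq> V" using T1 by auto
      show "V \<subseteq> fst ` \<Lambda>"
      proof
        fix u assume "u \<in> V"
        then obtain w where "(u, w) \<in> \<Lambda>" using T2 by blast
        thus "u \<in> fst ` \<Lambda>" by (metis fst_conv image_eqI)
      qed
    qed
  qed
  hence cL: "card \<Lambda> = card V" by (rule bij_betw_same_card)
  have key: "K3 * 2 ^ l * (M / 2 * n_l1) = n_l"
    unfolding K3_def M_def n_l1_def n_l_def K2_def[symmetric] using K2pos gpos by (simp add: field_simps)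
  define C where "C = \<lceil>K3 * 2 ^ l\<rceil>"
  have "real (card \<Lambda>) = n_l" using cL V_card by simp
  also have "\<dots> = K3 * 2 ^ l * real h" by (simp only: hreal key)
  also have "\<dots> \<le> real_of_int C * real h" unfolding C_def by (intro mult_right_mono) auto
  finally have LC: "int (card \<Lambda>) \<le> C * int h" by (metis of_int_le_iff of_int_mult of_int_of_nat_eq)
  obtain f where f: "bij_betw f \<Lambda> {0..<card \<Lambda>}" using ex_bij_betw_finite_nat[OF finL] by blast
  define c where "c p = f p div h" for p
  define P where "P j = {p\<in>\<Lambda>. c p = j}" for j
  have cardP: "card (P j) \<le> h" for j
  proof -
    have "inj_on f (P j)" using f unfolding bij_betw_def P_def by (auto intro: inj_on_subset)
    moreover have "f ` P j \<subseteq> {j*h..<j*h+h}"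
    proof
      fix y assume "y \<in> f ` P j"
      then obtain p where p: "p \<in> P j" "y = f p" by blast
      have hj: "f p div h = j" using p by (simp add: P_def c_def)
      have "f p = j*h + f p mod h" using div_mult_mod_eq[of "f p" h] unfolding hj by simp
      moreover have "f p mod h < h" using hpos by simp
      ultimately show "y \<in> {j*h..<j*h+h}" using p by simp
    qed
    ultimately have "card (P j) \<le> card {j*h..<j*h+h}" by (intro card_inj_on_le) auto
    thus ?thesis by simp
  qed
  define E where "E p = {d. sqrt (2 * a_l1) \<le> infdist (fst p) (squarelet (sqrt a_l1) d)
                          \<and> sqrt (2 * a_l1) \<le> infdist (snd p) (squarelet (sqrt a_l1) d)}" for p
  have badE: "card (D - E p) \<le> 50" for p
  proof -
    let ?B1 = "{d. infdist (fst p) (squarelet s d) < sqrt 2 * s}"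
    let ?B2 = "{d. infdist (snd p) (squarelet s d) < sqrt 2 * s}"
    have b1: "finite ?B1" "card ?B1 \<le> 25" using bad_card[OF s] by auto
    have b2: "finite ?B2" "card ?B2 \<le> 25" using bad_card[OF s] by auto
    have "D - E p \<subseteq> ?B1 \<union> ?B2" by (auto simp: E_def sq2 s_def[symmetric])
    hence "card (D - E p) \<le> card (?B1 \<union> ?B2)" using b1 b2 by (intro card_mono) auto
    also have "\<dots> \<le> card ?B1 + card ?B2" by (rule card_Un_le)
    finally show ?thesis using b1 b2 by linarith
  qed
  have "\<forall>j. \<exists>k. (\<forall>p\<in>P j. k p \<in> D \<inter> E p) \<and> (\<forall>d\<in>D. card {p\<in>P j. k p = d} \<le> q)"
  proof
    fix j
    show "\<exists>k. (\<forall>p\<in>P j. k p \<in> D \<inter> E p) \<and> (\<forall>d\<in>D. card {p\<in>P j. k p = d} \<le> q)"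
    proof (rule greedy[where e=50])
      show "finite (P j)" using finL by (simp add: P_def)
      show "finite D" by (rule finite_subset[OF D_sub]) simp
      show "\<forall>p\<in>P j. card (D - E p) \<le> 50" using badE by blast
      show "card (P j) \<le> (card D - 50) * q" using cardP[of j] h50 by linarith
    qed
  qed
  hence "\<exists>K. \<forall>j. (\<forall>p\<in>P j. K j p \<in> D \<inter> E p) \<and> (\<forall>d\<in>D. card {p\<in>P j. K j p = d} \<le> q)"
    by (rule choice)
  then obtain K where K: "\<forall>j. (\<forall>p\<in>P j. K j p \<in> D \<inter> E p) \<and> (\<forall>d\<in>D. card {p\<in>P j. K j p = d} \<le> q)"
    by blast
  have KA: "K j p \<in> D" "K j p \<in> E p" if "p \<in> P j" for j p using K that by auto
  have KB: "card {p\<in>P j. K j p = d} \<le> q" if "d \<in> D" for j d using K that by auto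
  define k where "k p = K (c p) p" for p
  show ?thesis
  proof (intro exI conjI ballI allI)
    fix p assume p: "p \<in> \<Lambda>"
    hence pP: "p \<in> P (c p)" by (simp add: P_def)
    thus "k p \<in> D" using KA unfolding k_def by blast
    show "sqrt (2 * a_l1) \<le> infdist (fst p) (squarelet (sqrt a_l1) (k p))"
      using KA(2)[OF pP] unfolding k_def E_def by blast
    show "sqrt (2 * a_l1) \<le> infdist (snd p) (squarelet (sqrt a_l1) (k p))"
      using KA(2)[OF pP] unfolding k_def E_def by blast
    have fp: "f p < card \<Lambda>" using f p by (auto simp: bij_betw_def)
    have "int (c p) < C"
    proof (rule ccontr)
      assume "\<not> ?thesis"
      hence "C * int h \<le> int (c p) * int h" by (intro mult_right_mono) auto
      also have "\<dots> \<le> int (f p)" unfolding c_def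
        by (metis div_mult_mod_eq le_add1 of_nat_le_iff of_nat_mult)
      finally show False using fp LC by linarith
    qed
    thus "real (c p) < of_int \<lceil>K3 * 2 ^ l\<rceil>" unfolding C_def
      by (metis of_int_less_iff of_int_of_nat_eq)
  next
    fix j d assume d: "d \<in> D"
    have "{p\<in>\<Lambda>. c p = j \<and> k p = d} = {p\<in>P j. K j p = d}" by (auto simp: P_def k_def)
    thus "real (card {p\<in>\<Lambda>. c p = j \<and> k p = d}) \<le> n_l1" using KB[OF d, of j] q by simp
  qed
qed

end
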